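(* Let $a\in(0,1)$, $p\in(0,1)$, and let $X=(X_t)_{t=0,\dots,n}$ be a stationary Markov chain generated by the copula $C(u,v)=a\min(u,v)+(1-a)\max(u+v-1,0)$ and Bernoulli($p$) marginal distribution, and let $\bar p=\frac1{n+1}\sum_{t=0}^nX_t$ be the sample mean. Then $\sqrt{n+1}(\bar p-p)\to N(0,\sigma^2)$ in distribution as $n\to\infty$, where $\sigma^2=\frac{p(1-p)(1+a-2p)}{1-a}$ if $p<1/2$ and $\sigma^2=\frac{p(1-p)(a+2p-1)}{1-a}$ if $p\ge1/2$.
   Context: A stationary Markov chain $(X_t)$ is generated by a copula $C$ and a marginal cdf $F$ if each $X_t$ has cdf $F$ and $P(X_t\le x,X_{t+1}\le y)=C(F(x),F(y))$ for all $x,y$; Bernoulli($p$) means $P(X_t=1)=p=1-P(X_t=0)$. *)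

theory Defs
  imports "HOL-Probability.Probability"
begin

definition mix_copula :: "real \<Rightarrow> real \<Rightarrow> real \<Rightarrow> real" where
  "mix_copula a u v = a * min u v + (1 - a) * max (u + v - 1) 0"

definition bernoulli_cdf :: "real \<Rightarrow> real \<Rightarrow> real" where
  "bernoulli_cdf p x = (if x < 0 then 0 else if x < 1 then 1 - p else 1)"

text \<open>Markov property for a discrete-valued process (X t) on a probability space M:
  P(X_0 = x_0, ..., X_(t+1) = x_(t+1)) * P(X_t = x_t)
    = P(X_0 = x_0, ..., X_t = x_t) * P(X_t = x_t, X_(t+1) = x_(t+1)),
  i.e. the conditional law of X_(t+1) given X_0..X_t depends only on X_t.\<close>
definition discrete_markov :: "'s measure \<Rightarrow> (nat \<Rightarrow> 's \<Rightarrow> real) \<Rightarrow> bool" where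
  "discrete_markov M X \<longleftrightarrow>
     (\<forall>t (x :: nat \<Rightarrow> real).
        measure M {\<omega> \<in> space M. \<forall>i\<le>Suc t. X i \<omega> = x i} * measure M {\<omega> \<in> space M. X t \<omega> = x t}
      = measure M {\<omega> \<in> space M. \<forall>i\<le>t. X i \<omega> = x i}
        * measure M {\<omega> \<in> space M. X t \<omega> = x t \<and> X (Suc t) \<omega> = x (Suc t)})"

definition copula_markov_chain ::
  "'s measure \<Rightarrow> (nat \<Rightarrow> 's \<Rightarrow> real) \<Rightarrow> (real \<Rightarrow> real \<Rightarrow> real) \<Rightarrow> (real \<Rightarrow> real) \<Rightarrow> bool" where
  "copula_markov_chain M X C F \<longleftrightarrow>
     prob_space M \<and>
     (\<forall>t. X t \<in> borel_measurable M) \<and>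
     discrete_markov M X \<and>
     (\<forall>t x. measure M {\<omega> \<in> space M. X t \<omega> \<le> x} = F x) \<and>
     (\<forall>t x y. measure M {\<omega> \<in> space M. X t \<omega> \<le> x \<and> X (Suc t) \<omega> \<le> y} = C (F x) (F y))"

end

theory Submission
  imports Defs "HOL-Real_Asymp.Real_Asymp"
begin


locale twost =
  fixes q00 q11 p :: real
  assumes p0: "0 < p" and p1: "p < 1"
  and stat: "(1-p)*(1-q00) = p*(1-q11)"
  and lamb: "\<bar>q00 + q11 - 1\<bar> < 1"
begin

definition "lam = q00 + q11 - 1"

fun g :: "real \<Rightarrow> nat \<Rightarrow> complex \<times> complex" where
  "g u 0 = (complex_of_real (1-p), complex_of_real p)"
| "g u (Suc m) = (q00 * fst (g u m) + (1-q11) * snd (g u m),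
                  iexp u * ((1-q00) * fst (g u m) + q11 * snd (g u m)))"

definition "psi u m = fst (g u m) + snd (g u m)"
definition "T u = q00 + q11 * iexp u"
definition "D u = lam * iexp u"

lemma g_rec2:
  "fst (g u (Suc (Suc m))) = T u * fst (g u (Suc m)) - D u * fst (g u m)"
  "snd (g u (Suc (Suc m))) = T u * snd (g u (Suc m)) - D u * snd (g u m)"
  by (simp_all add: T_def D_def lam_def algebra_simps)

lemma psi_rec: "psi u (Suc (Suc m)) = T u * psi u (Suc m) - D u * psi u m"
  unfolding psi_def g_rec2 by (simp add: algebra_simps)

lemma psi0: "psi u 0 = 1"
  by (simp add: psi_def)

lemma psi1: "psi u 1 = (1-p) + p * iexp u"
proof -
  have a: "q00*(1-p) + (1-q11)*p = 1-p" using stat by (simp add: algebra_simps)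
  have b: "(1-q00)*(1-p) + q11*p = p" using stat by (simp add: algebra_simps)
  have "psi u 1 = complex_of_real (q00*(1-p) + (1-q11)*p) + iexp u * complex_of_real ((1-q00)*(1-p) + q11*p)"
    by (simp add: psi_def algebra_simps)
  also have "\<dots> = (1-p) + p * iexp u" unfolding a b by simp
  finally show ?thesis .
qed

definition "sq u = csqrt (T u ^ 2 - 4 * D u)"
definition "r1 u = (T u + sq u) / 2"
definition "r2 u = (T u - sq u) / 2"
definition "c1 u = (psi u 1 - r2 u) / (r1 u - r2 u)"
definition "c2 u = (r1 u - psi u 1) / (r1 u - r2 u)"

lemma r_sum: "r1 u + r2 u = T u"
  by (simp add: r1_def r2_def field_simps)

lemma r_prod: "r1 u * r2 u = D u"
proof -
  have "r1 u * r2 u = (T u ^ 2 - sq u ^ 2) / 4"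
    by (simp add: r1_def r2_def field_simps power2_eq_square)
  also have "sq u ^ 2 = T u ^ 2 - 4 * D u" by (simp add: sq_def)
  finally show ?thesis by simp
qed

lemma closed:
  assumes ne: "r1 u \<noteq> r2 u"
  shows "psi u m = c1 u * r1 u ^ m + c2 u * r2 u ^ m"
proof -
  have d: "r1 u - r2 u \<noteq> 0" using ne by simp
  have "psi u m = c1 u * r1 u ^ m + c2 u * r2 u ^ m \<and>
        psi u (Suc m) = c1 u * r1 u ^ Suc m + c2 u * r2 u ^ Suc m"
  proof (induction m)
    case 0
    have "c1 u + c2 u = 1" using d unfolding c1_def c2_def
      by (simp add: add_divide_distrib[symmetric])
    moreover have "c1 u * r1 u + c2 u * r2 u = psi u 1" using d unfolding c1_def c2_def
      by (simp add: divide_simps) (simp add: algebra_simps)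
    ultimately show ?case by (simp add: psi0)
  next
    case (Suc m)
    then have h1: "psi u m = c1 u * r1 u ^ m + c2 u * r2 u ^ m"
      and h2: "psi u (Suc m) = c1 u * r1 u ^ Suc m + c2 u * r2 u ^ Suc m" by auto
    have "psi u (Suc (Suc m)) = T u * psi u (Suc m) - D u * psi u m" by (rule psi_rec)
    also have "\<dots> = (r1 u + r2 u) * psi u (Suc m) - r1 u * r2 u * psi u m"
      by (simp add: r_sum r_prod)
    also have "\<dots> = c1 u * r1 u ^ Suc (Suc m) + c2 u * r2 u ^ Suc (Suc m)"
      unfolding h1 h2 by (simp add: algebra_simps)
    finally show ?case using h2 by simp
  qed
  then show ?thesis by simp
qed

lemma lam_bd: "\<bar>lam\<bar> < 1" using lamb by (simp add: lam_def)

lemma T0: "T 0 = 1 + lam" by (simp add: T_def lam_def)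
lemma D0: "D 0 = lam" by (simp add: D_def)

lemma isCont_T: "isCont T x" unfolding T_def by (intro continuous_intros)
lemma isCont_D: "isCont D x" unfolding D_def by (intro continuous_intros)

lemma sq0: "sq 0 = 1 - lam"
proof -
  have "T 0 ^ 2 - 4 * D 0 = complex_of_real ((1 - lam)^2)"
    by (simp add: T0 D0 power2_eq_square algebra_simps)
  then show ?thesis using lam_bd by (simp add: sq_def csqrt_of_real)
qed

lemma isCont_sq: "isCont sq 0"
proof -
  have "T 0 ^ 2 - 4 * D 0 = complex_of_real ((1 - lam)^2)"
    by (simp add: T0 D0 power2_eq_square algebra_simps)
  moreover have "(1 - lam)^2 > 0" using lam_bd by simp
  ultimately have "T 0 ^ 2 - 4 * D 0 \<notin> \<real>\<^sub>\<le>\<^sub>0"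
    by (simp only: complex_nonpos_Reals_iff Re_complex_of_real) simp
  then show ?thesis unfolding sq_def
    by (intro isCont_csqrt' continuous_intros isCont_T isCont_D)
qed

lemma r1_0: "r1 0 = 1" by (simp add: r1_def T0 sq0)
lemma r2_0: "r2 0 = lam" by (simp add: r2_def T0 sq0)
lemma isCont_r1: "isCont r1 0" unfolding r1_def by (intro continuous_intros isCont_T isCont_sq) auto
lemma isCont_r2: "isCont r2 0" unfolding r2_def by (intro continuous_intros isCont_T isCont_sq) auto
lemma isCont_psi1: "isCont (\<lambda>u. psi u 1) 0" unfolding psi1 by (intro continuous_intros)
lemma psi1_0: "psi 0 1 = 1" "psi 0 (Suc 0) = 1" using psi1[of 0] by simp_all
lemma rdiff0: "r1 0 - r2 0 \<noteq> 0" using lam_bd by (simp add: r1_0 r2_0)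
lemma isCont_c1: "isCont c1 0" unfolding c1_def
  using rdiff0 by (intro continuous_intros isCont_r1 isCont_r2 isCont_psi1) auto
lemma isCont_c2: "isCont c2 0" unfolding c2_def
  using rdiff0 by (intro continuous_intros isCont_r1 isCont_r2 isCont_psi1) auto
lemma c1_0: "c1 0 = 1" using rdiff0 by (simp add: c1_def psi1_0 r1_0 r2_0)
lemma c2_0: "c2 0 = 0" by (simp add: c2_def psi1_0 r1_0 r2_0)

definition "z u = r1 u * iexp (-(p*u))"
definition "Tp u = T u * iexp (-(p*u))"
definition "E u = 1 - Tp u + D u * iexp (-(2*p*u))"
definition "K2 = q00*p^2 + q11*(1-p)^2 - lam*(1-2*p)^2"

lemma iexp_add: "iexp (x + y) = iexp x * iexp y"
  by (simp add: distrib_left exp_add)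

lemma key: "(z u - 1) * (z u + 1 - Tp u) = - E u"
proof -
  have quad: "r1 u ^ 2 - T u * r1 u + D u = 0"
    unfolding r_sum[symmetric, of u] r_prod[symmetric, of u] by (simp add: power2_eq_square algebra_simps)
  have e2: "iexp (-(2*p*u)) = iexp (-(p*u)) * iexp (-(p*u))"
    unfolding iexp_add[symmetric] by (rule arg_cong[where f=iexp]) simp
  have "(z u - 1) * (z u + 1 - Tp u) + E u = iexp (-(p*u)) ^ 2 * (r1 u ^ 2 - T u * r1 u + D u)"
    unfolding z_def Tp_def E_def e2 by (simp add: power2_eq_square algebra_simps)
  also have "\<dots> = 0" by (simp add: quad)
  finally show ?thesis by (simp add: add_eq_0_iff)
qed

lemma E_expand: "E u = 1 - q00 * iexp (-(p*u)) - q11 * iexp ((1-p)*u) + lam * iexp ((1-2*p)*u)"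
proof -
  have a: "iexp u * iexp (-(p*u)) = iexp ((1-p)*u)" unfolding iexp_add[symmetric]
    by (rule arg_cong[where f=iexp]) (simp add: algebra_simps)
  have b: "iexp u * iexp (-(2*p*u)) = iexp ((1-2*p)*u)" unfolding iexp_add[symmetric]
    by (rule arg_cong[where f=iexp]) (simp add: algebra_simps)
  show ?thesis unfolding E_def Tp_def T_def D_def
    using a b by (simp add: algebra_simps)
qed

definition "Rm x = iexp x - (1 + \<i> * x - x^2/2)"

lemma Rm_bd: "norm (Rm x) \<le> \<bar>x\<bar>^3 / 6"
proof -
  have "(\<Sum>k\<le>2. (\<i> * complex_of_real x)^k / fact k) = 1 + \<i> * x - x^2/2"
    by (simp add: numeral_2_eq_2 power2_eq_square field_simps)
  with iexp_approx1[of x 2] show ?thesis by (simp add: Rm_def numeral_3_eq_3)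
qed

lemma poly_part: "1 - q00 * (1 + \<i> * complex_of_real (-(p*u)) - complex_of_real (-(p*u))^2/2)
      - q11 * (1 + \<i> * complex_of_real ((1-p)*u) - complex_of_real ((1-p)*u)^2/2)
      + lam * (1 + \<i> * complex_of_real ((1-2*p)*u) - complex_of_real ((1-2*p)*u)^2/2)
      = complex_of_real (u^2 * K2 / 2)"
proof -
  have lin: "q00*p - q11*(1-p) + lam*(1-2*p) = 0" using stat by (simp add: lam_def algebra_simps)
  have lin2: "u*(q00*p - q11*(1-p) + lam*(1-2*p)) = 0" using lin by simp
  show ?thesis using lin2 unfolding complex_eq_iff
    by (simp add: K2_def lam_def power2_eq_square field_simps)
qed

definition "CE = (\<bar>q00\<bar> * p^3 + \<bar>q11\<bar> * (1-p)^3 + \<bar>lam\<bar> * \<bar>1-2*p\<bar>^3) / 6"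

lemma E_bd: "norm (E u - complex_of_real (u^2 * K2 / 2)) \<le> CE * \<bar>u\<bar>^3"
proof -
  have "E u - complex_of_real (u^2 * K2 / 2) = - q00 * Rm (-(p*u)) - q11 * Rm ((1-p)*u) + lam * Rm ((1-2*p)*u)"
    unfolding E_expand poly_part[symmetric] Rm_def by (simp add: algebra_simps)
  also have "norm \<dots> \<le> \<bar>q00\<bar> * norm (Rm (-(p*u))) + \<bar>q11\<bar> * norm (Rm ((1-p)*u)) + \<bar>lam\<bar> * norm (Rm ((1-2*p)*u))"
    by (rule order_trans[OF norm_triangle_ineq] add_mono order_trans[OF norm_triangle_ineq4])+
       (simp_all add: norm_mult)
  also have "\<dots> \<le> \<bar>q00\<bar> * (\<bar>-(p*u)\<bar>^3/6) + \<bar>q11\<bar> * (\<bar>(1-p)*u\<bar>^3/6) + \<bar>lam\<bar> * (\<bar>(1-2*p)*u\<bar>^3/6)"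
    by (intro add_mono mult_left_mono Rm_bd) auto
  also have "\<dots> = CE * \<bar>u\<bar>^3"
  proof -
    have h1: "\<bar>-(p*u)\<bar> = p * \<bar>u\<bar>" using p0 by (simp add: abs_mult)
    have h2: "\<bar>(1-p)*u\<bar> = (1-p) * \<bar>u\<bar>" using p1 by (simp add: abs_mult)
    have h3: "\<bar>(1-2*p)*u\<bar> = \<bar>1-2*p\<bar> * \<bar>u\<bar>" by (simp add: abs_mult)
    show ?thesis unfolding h1 h2 h3 by (simp only: CE_def power_mult_distrib) (simp add: algebra_simps)
  qed
  finally show ?thesis .
qed

lemma ev_ne0: "eventually (\<lambda>u::real. u \<noteq> 0) (at 0)"
  by (simp add: eventually_at_filter)

lemma E_lim: "((\<lambda>u. E u / complex_of_real (u^2)) \<longlongrightarrow> complex_of_real (K2/2)) (at 0)"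
proof -
  have "((\<lambda>u. E u / complex_of_real (u^2) - complex_of_real (K2/2)) \<longlongrightarrow> 0) (at 0)"
  proof (rule Lim_null_comparison)
    show "eventually (\<lambda>u. norm (E u / complex_of_real (u^2) - complex_of_real (K2/2)) \<le> CE * \<bar>u\<bar>) (at 0)"
      using ev_ne0
    proof eventually_elim
      case (elim u)
      have "E u / complex_of_real (u^2) - complex_of_real (K2/2)
          = (E u - complex_of_real (u^2 * K2 / 2)) / complex_of_real (u^2)"
        using elim by (simp add: field_simps)
      also have "norm \<dots> = norm (E u - complex_of_real (u^2 * K2 / 2)) / u^2"
        by (simp add: norm_divide norm_power)
      also have "\<dots> \<le> CE * \<bar>u\<bar>^3 / u^2"
        by (intro divide_right_mono E_bd) simp
      also have "\<dots> = CE * \<bar>u\<bar>"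
      proof -
        have "\<bar>u\<bar>^3 = \<bar>u\<bar> * u^2" by (simp add: eval_nat_numeral)
        then show ?thesis using elim by simp
      qed
      finally show ?case .
    qed
    show "((\<lambda>u. CE * \<bar>u\<bar>) \<longlongrightarrow> 0) (at 0)"
      using tendsto_mult_right_zero[OF tendsto_rabs_zero[OF tendsto_ident_at[of "0::real" UNIV]], of CE] .
  qed
  then have "((\<lambda>u. (E u / complex_of_real (u^2) - complex_of_real (K2/2)) + complex_of_real (K2/2)) \<longlongrightarrow> 0 + complex_of_real (K2/2)) (at 0)"
    by (intro tendsto_add tendsto_const)
  then show ?thesis by simp
qed

lemma z0: "z 0 = 1" by (simp add: z_def r1_0)
lemma Tp0: "Tp 0 = 1 + lam" by (simp add: Tp_def T0)
lemma isCont_z: "isCont z 0" unfolding z_def by (intro continuous_intros isCont_r1)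
lemma isCont_Tp: "isCont Tp 0" unfolding Tp_def by (intro continuous_intros isCont_T)

lemma z_lim: "((\<lambda>u. (z u - 1) / complex_of_real (u^2)) \<longlongrightarrow> - complex_of_real (K2/2) / complex_of_real (1 - lam)) (at 0)"
proof -
  have den: "((\<lambda>u. z u + 1 - Tp u) \<longlongrightarrow> complex_of_real (1 - lam)) (at 0)"
  proof -
    have "((\<lambda>u. z u + 1 - Tp u) \<longlongrightarrow> z 0 + 1 - Tp 0) (at 0)"
      using isCont_z isCont_Tp unfolding isCont_def by (intro tendsto_intros)
    then show ?thesis by (simp add: z0 Tp0)
  qed
  have ne: "complex_of_real (1 - lam) \<noteq> 0" using lam_bd by simp
  have ev: "eventually (\<lambda>u. z u + 1 - Tp u \<noteq> 0) (at 0)"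
    using tendsto_imp_eventually_ne[OF den ne] .
  have "((\<lambda>u. - (E u / complex_of_real (u^2)) / (z u + 1 - Tp u)) \<longlongrightarrow> - complex_of_real (K2/2) / complex_of_real (1 - lam)) (at 0)"
    by (rule tendsto_divide[OF tendsto_minus[OF E_lim] den ne])
  then show ?thesis
  proof (rule Lim_transform_eventually)
    show "eventually (\<lambda>u. - (E u / complex_of_real (u^2)) / (z u + 1 - Tp u) = (z u - 1) / complex_of_real (u^2)) (at 0)"
      using ev
    proof eventually_elim
      case (elim u)
      have eq: "z u - 1 = - E u / (z u + 1 - Tp u)"
        by (subst key[of u, symmetric]) (rule nonzero_mult_div_cancel_right[OF elim, symmetric])
      have "- (E u / complex_of_real (u^2)) / (z u + 1 - Tp u) = (- E u / (z u + 1 - Tp u)) / complex_of_real (u^2)"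
        by (simp add: divide_divide_eq_left mult.commute)
      then show ?case by (simp only: eq[symmetric])
    qed
  qed
qed

definition "hL w = (if w = 1 then 1 else Ln w / (w - 1))"

lemma isCont_hL: "isCont hL 1"
proof -
  have "(Ln has_field_derivative inverse 1) (at (1::complex))"
    by (rule has_field_derivative_Ln) simp
  then have "((\<lambda>y. (Ln y - Ln 1) / (y - 1)) \<longlongrightarrow> 1) (at (1::complex))"
    unfolding has_field_derivative_iff by simp
  then have "(hL \<longlongrightarrow> 1) (at 1)"
  proof (rule Lim_transform_eventually)
    show "eventually (\<lambda>y. (Ln y - Ln 1) / (y - 1) = hL y) (at (1::complex))"
      by (simp add: eventually_at_filter hL_def)
  qed
  then show ?thesis unfolding isCont_def by (simp add: hL_def)
qed

definition "Lim0 = - complex_of_real (K2/2) / complex_of_real (1 - lam)"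

lemma LQ_lim: "((\<lambda>u. Ln (z u) / complex_of_real (u^2)) \<longlongrightarrow> Lim0) (at 0)"
proof -
  have zt: "(z \<longlongrightarrow> 1) (at 0)" using isCont_z z0 unfolding isCont_def by simp
  have lim: "((\<lambda>u. hL (z u) * ((z u - 1) / complex_of_real (u^2))) \<longlongrightarrow> hL 1 * Lim0) (at 0)"
    unfolding Lim0_def by (intro tendsto_mult isCont_tendsto_compose[OF isCont_hL zt] z_lim)
  have "hL (z u) * ((z u - 1) / complex_of_real (u^2)) = Ln (z u) / complex_of_real (u^2)" for u
    by (cases "z u = 1") (simp_all add: hL_def)
  then have eqf: "(\<lambda>u. hL (z u) * ((z u - 1) / complex_of_real (u^2))) = (\<lambda>u. Ln (z u) / complex_of_real (u^2))"
    by (rule ext)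
  have hL1: "hL 1 = 1" by (simp add: hL_def)
  show ?thesis using lim unfolding eqf hL1 by simp
qed

definition "s2 = K2 / (1 - lam)"

lemma K2_eq: "K2 = p*(1-p)*(1+lam)"
proof -
  have q11eq: "q11 = 1 - (1-p)*(1-q00)/p" using stat p0 by (simp add: field_simps)
  show ?thesis unfolding K2_def lam_def unfolding q11eq using p0
    by (simp add: field_simps power2_eq_square)
qed

lemma s2_eq: "s2 = p*(1-p)*(1+lam)/(1-lam)"
  by (simp add: s2_def K2_eq)

lemma s2_pos: "s2 > 0"
  unfolding s2_eq using lam_bd p0 p1 by (intro divide_pos_pos mult_pos_pos) auto

lemma g_zero: "g 0 m = (complex_of_real (1-p), complex_of_real p)"
proof (induction m)
  case (Suc m)
  have a: "q00*(1-p) + (1-q11)*p = 1-p" using stat by (simp add: algebra_simps)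
  have b: "(1-q00)*(1-p) + q11*p = p" using stat by (simp add: algebra_simps)
  have "g 0 (Suc m) = (complex_of_real (q00*(1-p) + (1-q11)*p), complex_of_real ((1-q00)*(1-p) + q11*p))"
    using Suc by simp
  then show ?case unfolding a b .
qed simp

lemma psi_zero: "psi 0 m = 1"
  by (simp add: psi_def g_zero)

lemma main_lim:
  "(\<lambda>n. iexp (-(p * t * sqrt (real n + 1))) * psi (t / sqrt (real n + 1)) (Suc n))
     \<longlonglongrightarrow> complex_of_real (exp (-(s2 * t^2) / 2))"
proof (cases "t = 0")
  case True
  then show ?thesis by (simp add: psi_zero)
next
  case False
  define uu where "uu n = t / sqrt (real n + 1)" for n
  have uu0: "uu \<longlonglongrightarrow> 0" unfolding uu_def by real_asymp
  have uuf: "filterlim uu (at 0) sequentially"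
    using False by (intro filterlim_atI uu0) (simp add: uu_def)
  have ev1: "eventually (\<lambda>u. r1 u - r2 u \<noteq> 0) (at 0)"
  proof -
    have "((\<lambda>u. r1 u - r2 u) \<longlongrightarrow> r1 0 - r2 0) (at 0)"
      using isCont_r1 isCont_r2 unfolding isCont_def by (intro tendsto_diff)
    then show ?thesis using tendsto_imp_eventually_ne rdiff0 by blast
  qed
  have ev2: "eventually (\<lambda>u. z u \<noteq> 0) (at 0)"
  proof -
    have "(z \<longlongrightarrow> 1) (at 0)" using isCont_z z0 unfolding isCont_def by simp
    then show ?thesis using tendsto_imp_eventually_ne by (metis one_neq_zero)
  qed
  have ev3: "eventually (\<lambda>u. norm (r2 u) < 1) (at 0)"
  proof -
    have "((\<lambda>u. norm (r2 u)) \<longlongrightarrow> norm (r2 0)) (at 0)"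
      using isCont_r2 unfolding isCont_def by (intro tendsto_norm)
    moreover have "norm (r2 0) < 1" using lam_bd by (simp add: r2_0)
    ultimately show ?thesis by (rule order_tendstoD(2))
  qed
  define A where "A u = c1 u * exp (complex_of_real (t^2) * (Ln (z u) / complex_of_real (u^2)))" for u
  define B where "B n = c2 (uu n) * (r2 (uu n) * iexp (-(p * uu n))) ^ Suc n" for n
  have Alim: "(A \<longlongrightarrow> c1 0 * exp (complex_of_real (t^2) * Lim0)) (at 0)"
    unfolding A_def using isCont_c1 unfolding isCont_def by (intro tendsto_intros LQ_lim)
  have Aseq: "(\<lambda>n. A (uu n)) \<longlonglongrightarrow> exp (complex_of_real (t^2) * Lim0)"
    using filterlim_compose[OF Alim uuf] by (simp add: c1_0 o_def)
  have c2seq: "(\<lambda>n. c2 (uu n)) \<longlonglongrightarrow> 0"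
    using isCont_tendsto_compose[OF isCont_c2 uu0] by (simp add: c2_0)
  have ev: "eventually (\<lambda>n. r1 (uu n) - r2 (uu n) \<noteq> 0 \<and> z (uu n) \<noteq> 0 \<and> norm (r2 (uu n)) < 1) sequentially"
    using eventually_compose_filterlim[OF eventually_conj[OF ev1 eventually_conj[OF ev2 ev3]] uuf] .
  have Bseq: "B \<longlonglongrightarrow> 0"
  proof (rule Lim_null_comparison)
    show "eventually (\<lambda>n. norm (B n) \<le> norm (c2 (uu n))) sequentially"
      using ev
    proof eventually_elim
      case (elim n)
      have "norm (r2 (uu n) * iexp (-(p * uu n))) ^ Suc n \<le> 1"
        using elim by (intro power_le_one) (simp_all add: norm_mult)
      then show ?case unfolding B_def norm_mult norm_power
        by (simp add: mult_left_le)
    qed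
    show "(\<lambda>n. norm (c2 (uu n))) \<longlonglongrightarrow> 0" using tendsto_norm_zero[OF c2seq] .
  qed
  have "(\<lambda>n. A (uu n) + B n) \<longlonglongrightarrow> exp (complex_of_real (t^2) * Lim0) + 0"
    by (intro tendsto_add Aseq Bseq)
  then have lim1: "(\<lambda>n. A (uu n) + B n) \<longlonglongrightarrow> complex_of_real (exp (-(s2 * t^2) / 2))"
  proof -
    have h: "complex_of_real (t^2) * Lim0 = complex_of_real (-(s2 * t^2) / 2)"
      by (simp add: Lim0_def s2_def field_simps)
    have "exp (complex_of_real (t^2) * Lim0) + 0 = complex_of_real (exp (-(s2 * t^2) / 2))"
      by (simp only: h exp_of_real add_0_right)
    then show ?thesis using \<open>(\<lambda>n. A (uu n) + B n) \<longlonglongrightarrow> _\<close> by simp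
  qed
  show ?thesis
  proof (rule Lim_transform_eventually[OF lim1])
    show "eventually (\<lambda>n. A (uu n) + B n = iexp (-(p * t * sqrt (real n + 1))) * psi (t / sqrt (real n + 1)) (Suc n)) sequentially"
      using ev
    proof eventually_elim
      case (elim n)
      define u where "u = uu n"
      define N where "N = Suc n"
      have sN: "sqrt (real n + 1) > 0" by simp
      have uN: "u * real N = t * sqrt (real n + 1)"
      proof -
        have "real N = sqrt (real n + 1) * sqrt (real n + 1)" by (simp add: N_def)
        then show ?thesis unfolding u_def uu_def using sN by (simp add: field_simps)
      qed
      have Nt: "real N = t^2 / u^2"
      proof -
        have "u^2 = t^2 / (real n + 1)" unfolding u_def uu_def by (simp add: power_divide)
        then show ?thesis using False by (simp add: N_def)
      qed
      have e1: "iexp (-(p * t * sqrt (real n + 1))) = iexp (-(p*u)) ^ N"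
      proof -
        have "iexp (-(p*u)) ^ N = exp (of_nat N * (\<i> * complex_of_real (-(p*u))))"
          by (rule exp_of_nat_mult[symmetric])
        also have "of_nat N * (\<i> * complex_of_real (-(p*u))) = \<i> * complex_of_real (-(p * (u * real N)))"
          by simp
        finally show ?thesis unfolding uN by (simp add: mult.assoc)
      qed
      have e2: "z u ^ N = exp (complex_of_real (t^2) * (Ln (z u) / complex_of_real (u^2)))"
      proof -
        have "z u ^ N = exp (of_nat N * Ln (z u))"
          using elim by (simp add: exp_of_nat_mult u_def)
        also have "of_nat N * Ln (z u) = complex_of_real (t^2) * (Ln (z u) / complex_of_real (u^2))"
          using Nt by (metis of_real_of_nat_eq of_real_divide times_divide_eq_left times_divide_eq_right)
        finally show ?thesis .
      qed
      have "iexp (-(p * t * sqrt (real n + 1))) * psi u N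
          = iexp (-(p*u)) ^ N * (c1 u * r1 u ^ N + c2 u * r2 u ^ N)"
        using elim closed[of u N] unfolding e1 u_def by simp
      also have "\<dots> = c1 u * z u ^ N + c2 u * (r2 u * iexp (-(p*u))) ^ N"
        unfolding z_def by (simp add: power_mult_distrib algebra_simps)
      also have "\<dots> = A u + B n"
      proof -
        have "A u = c1 u * z u ^ N" by (simp only: A_def e2)
        moreover have "B n = c2 u * (r2 u * iexp (-(p*u))) ^ N" by (simp only: B_def u_def N_def)
        ultimately show ?thesis by simp
      qed
      finally show ?case unfolding u_def uu_def N_def by simp
    qed
  qed
qed

end


lemma real_distribution_normal: "0 < s \<Longrightarrow> real_distribution (density lborel (normal_density 0 s))"
  unfolding real_distribution_def real_distribution_axioms_def
  using prob_space_normal_density[of s 0] by simp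

lemma char_normal:
  assumes s: "0 < s"
  shows "char (density lborel (normal_density 0 s)) t = complex_of_real (exp (- ((s * t)^2) / 2))"
proof -
  interpret S: prob_space std_normal_distribution
    using real_dist_normal_dist real_distribution_def by blast
  have d0: "distributed std_normal_distribution lborel (\<lambda>x. x) std_normal_density"
    unfolding distributed_def
    by (auto simp: distr_id2 sets_eq_imp_space_eq)
  have "distributed std_normal_distribution lborel (\<lambda>x. 0 + s * x) (normal_density (0 + s * 0) (\<bar>s\<bar> * 1))"
    by (rule S.normal_density_affine[OF d0]) (use s in auto)
  then have "distr std_normal_distribution lborel (\<lambda>x. s * x) = density lborel (normal_density 0 s)"
    using s unfolding distributed_def by simp
  then have "char (density lborel (normal_density 0 s)) t = char (distr std_normal_distribution lborel (\<lambda>x. s * x)) t"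
    by simp
  also have "\<dots> = char std_normal_distribution (t * s)"
    unfolding char_def by (subst integral_distr) (auto simp: mult.assoc)
  also have "\<dots> = complex_of_real (exp (- ((s * t)^2) / 2))"
    by (simp add: char_std_normal_distribution mult.commute)
  finally show ?thesis .
qed


locale cmc = prob_space M for M :: "'s measure" +
  fixes X :: "nat \<Rightarrow> 's \<Rightarrow> real" and a p :: real
  assumes a0: "0 < a" and a1: "a < 1" and p0: "0 < p" and p1: "p < 1"
  and cmc: "copula_markov_chain M X (mix_copula a) (bernoulli_cdf p)"
begin

lemma Xm[measurable]: "X t \<in> borel_measurable M"
  using cmc unfolding copula_markov_chain_def by auto

lemma F: "prob {\<omega>\<in>space M. X t \<omega> \<le> x} = bernoulli_cdf p x"
  using cmc unfolding copula_markov_chain_def by auto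

lemma F2: "prob {\<omega>\<in>space M. X t \<omega> \<le> x \<and> X (Suc t) \<omega> \<le> y} = mix_copula a (bernoulli_cdf p x) (bernoulli_cdf p y)"
  using cmc unfolding copula_markov_chain_def by auto

lemma markovX: "discrete_markov M X"
  using cmc unfolding copula_markov_chain_def by auto

lemma null_int:
  assumes "a' \<le> b \<Longrightarrow> bernoulli_cdf p b = bernoulli_cdf p a'"
  shows "{\<omega>\<in>space M. a' < X t \<omega> \<and> X t \<omega> \<le> b} \<in> null_sets M"
proof (cases "a' \<le> b")
  case True
  have "{\<omega>\<in>space M. a' < X t \<omega> \<and> X t \<omega> \<le> b} = {\<omega>\<in>space M. X t \<omega> \<le> b} - {\<omega>\<in>space M. X t \<omega> \<le> a'}"
    by auto
  moreover have "prob ({\<omega>\<in>space M. X t \<omega> \<le> b} - {\<omega>\<in>space M. X t \<omega> \<le> a'}) = 0"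
    using True assms by (subst finite_measure_Diff) (auto simp: F)
  ultimately show ?thesis by (auto simp: emeasure_eq_measure intro!: null_setsI)
next
  case False
  then have e: "{\<omega>\<in>space M. a' < X t \<omega> \<and> X t \<omega> \<le> b} = {}" by auto
  show ?thesis unfolding e by simp
qed

lemma null_le:
  assumes "bernoulli_cdf p b = 0"
  shows "{\<omega>\<in>space M. X t \<omega> \<le> b} \<in> null_sets M"
  using assms by (auto simp: emeasure_eq_measure F intro!: null_setsI)

lemma AE01: "AE \<omega> in M. X t \<omega> = 0 \<or> X t \<omega> = 1"
proof -
  have n1: "AE \<omega> in M. \<not> X t \<omega> < 0"
  proof (rule AE_I')
    show "(\<Union>k. {\<omega>\<in>space M. X t \<omega> \<le> - inverse (real (Suc k))}) \<in> null_sets M"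
      by (intro null_sets_UN null_le) (simp add: bernoulli_cdf_def)
    show "{\<omega>\<in>space M. \<not> \<not> X t \<omega> < 0} \<subseteq> (\<Union>k. {\<omega>\<in>space M. X t \<omega> \<le> - inverse (real (Suc k))})"
    proof (rule subsetI)
      fix \<omega> assume "\<omega> \<in> {\<omega>\<in>space M. \<not> \<not> X t \<omega> < 0}"
      then have "\<omega> \<in> space M" "X t \<omega> < 0" by auto
      then obtain k where "inverse (real (Suc k)) < - X t \<omega>"
        using reals_Archimedean[of "- X t \<omega>"] by auto
      then show "\<omega> \<in> (\<Union>k. {\<omega>\<in>space M. X t \<omega> \<le> - inverse (real (Suc k))})"
        using \<open>\<omega> \<in> space M\<close> by (auto intro!: exI[of _ k])
    qed
  qed
  have n2: "AE \<omega> in M. \<not> (0 < X t \<omega> \<and> X t \<omega> < 1)"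
  proof (rule AE_I')
    show "(\<Union>k. {\<omega>\<in>space M. 0 < X t \<omega> \<and> X t \<omega> \<le> 1 - inverse (real (Suc k))}) \<in> null_sets M"
    proof (intro null_sets_UN null_int)
      fix k
      have "inverse (real (Suc k)) \<le> 1" by (simp add: field_simps)
      moreover have "0 < inverse (real (Suc k))" by simp
      ultimately show "bernoulli_cdf p (1 - inverse (real (Suc k))) = bernoulli_cdf p 0"
        by (simp add: bernoulli_cdf_def)
    qed
    show "{\<omega>\<in>space M. \<not> \<not> (0 < X t \<omega> \<and> X t \<omega> < 1)} \<subseteq> (\<Union>k. {\<omega>\<in>space M. 0 < X t \<omega> \<and> X t \<omega> \<le> 1 - inverse (real (Suc k))})"
    proof (rule subsetI)
      fix \<omega> assume "\<omega> \<in> {\<omega>\<in>space M. \<not> \<not> (0 < X t \<omega> \<and> X t \<omega> < 1)}"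
      then have "\<omega> \<in> space M" "0 < X t \<omega>" "X t \<omega> < 1" by auto
      then obtain k where "inverse (real (Suc k)) < 1 - X t \<omega>"
        using reals_Archimedean[of "1 - X t \<omega>"] by auto
      then show "\<omega> \<in> (\<Union>k. {\<omega>\<in>space M. 0 < X t \<omega> \<and> X t \<omega> \<le> 1 - inverse (real (Suc k))})"
        using \<open>\<omega> \<in> space M\<close> \<open>0 < X t \<omega>\<close> by (auto intro!: exI[of _ k])
    qed
  qed
  have n3: "AE \<omega> in M. \<not> 1 < X t \<omega>"
  proof (rule AE_I')
    show "(\<Union>k. {\<omega>\<in>space M. 1 < X t \<omega> \<and> X t \<omega> \<le> real k}) \<in> null_sets M"
      by (intro null_sets_UN null_int) (simp add: bernoulli_cdf_def)
    show "{\<omega>\<in>space M. \<not> \<not> 1 < X t \<omega>} \<subseteq> (\<Union>k. {\<omega>\<in>space M. 1 < X t \<omega> \<and> X t \<omega> \<le> real k})"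
    proof (rule subsetI)
      fix \<omega> assume "\<omega> \<in> {\<omega>\<in>space M. \<not> \<not> 1 < X t \<omega>}"
      then have "\<omega> \<in> space M" "1 < X t \<omega>" by auto
      then obtain k where "X t \<omega> \<le> real k"
        using real_arch_simple by blast
      then show "\<omega> \<in> (\<Union>k. {\<omega>\<in>space M. 1 < X t \<omega> \<and> X t \<omega> \<le> real k})"
        using \<open>\<omega> \<in> space M\<close> \<open>1 < X t \<omega>\<close> by auto
    qed
  qed
  show ?thesis using n1 n2 n3 by eventually_elim auto
qed

definition "Y t \<omega> = (if X t \<omega> \<le> 0 then 0 else (1::real))"

lemma Ym[measurable]: "Y t \<in> borel_measurable M"
  unfolding Y_def by measurable

lemma Y01: "Y t \<omega> = 0 \<or> Y t \<omega> = 1"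
  by (simp add: Y_def)

lemma AEXY: "AE \<omega> in M. \<forall>t. X t \<omega> = Y t \<omega>"
proof -
  have "AE \<omega> in M. X t \<omega> = Y t \<omega>" for t
    using AE01[of t] by eventually_elim (auto simp: Y_def)
  then show ?thesis by (simp add: AE_all_countable)
qed

definition "c = mix_copula a (1-p) (1-p)"
definition "q00 = c / (1-p)"
definition "q11 = (2*p - 1 + c) / p"
definition "pif (x::real) = (if x = 0 then 1 - p else (p::real))"
definition "Qf (x::real) (y::real) = (if x = 0 then (if y = 0 then q00 else 1 - q00) else (if y = 0 then 1 - q11 else q11))"

lemma cdf0: "bernoulli_cdf p 0 = 1 - p" by (simp add: bernoulli_cdf_def)

lemma setY0: "{\<omega>\<in>space M. Y t \<omega> = 0} = {\<omega>\<in>space M. X t \<omega> \<le> 0}"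
  by (auto simp: Y_def)
lemma setY1: "{\<omega>\<in>space M. Y t \<omega> = 1} = space M - {\<omega>\<in>space M. X t \<omega> \<le> 0}"
  by (auto simp: Y_def)

lemma pY: "y = 0 \<or> y = 1 \<Longrightarrow> prob {\<omega>\<in>space M. Y t \<omega> = y} = pif y"
proof (elim disjE)
  assume "y = 0" then show ?thesis by (simp add: setY0 F cdf0 pif_def)
next
  assume "y = 1" then show ?thesis
    by (simp add: setY1 finite_measure_Diff F cdf0 pif_def prob_space)
qed

lemma pif_pos: "y = 0 \<or> y = 1 \<Longrightarrow> pif y > 0"
  using p0 p1 by (auto simp: pif_def)

lemma P2Y:
  assumes "x = 0 \<or> x = 1" "y = 0 \<or> y = 1"
  shows "prob {\<omega>\<in>space M. Y t \<omega> = x \<and> Y (Suc t) \<omega> = y} = pif x * Qf x y"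
proof -
  have m1: "{\<omega>\<in>space M. X t \<omega> \<le> 0 \<and> X (Suc t) \<omega> \<le> 0} \<in> sets M" by measurable
  have P00: "prob {\<omega>\<in>space M. Y t \<omega> = 0 \<and> Y (Suc t) \<omega> = 0} = c"
  proof -
    have "{\<omega>\<in>space M. Y t \<omega> = 0 \<and> Y (Suc t) \<omega> = 0} = {\<omega>\<in>space M. X t \<omega> \<le> 0 \<and> X (Suc t) \<omega> \<le> 0}"
      by (auto simp: Y_def)
    then show ?thesis by (simp add: F2 cdf0 c_def)
  qed
  have P01: "prob {\<omega>\<in>space M. Y t \<omega> = 0 \<and> Y (Suc t) \<omega> = 1} = 1 - p - c"
  proof -
    have "{\<omega>\<in>space M. Y t \<omega> = 0 \<and> Y (Suc t) \<omega> = 1} = {\<omega>\<in>space M. X t \<omega> \<le> 0} - {\<omega>\<in>space M. X t \<omega> \<le> 0 \<and> X (Suc t) \<omega> \<le> 0}"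
      by (auto simp: Y_def)
    then show ?thesis by (simp add: finite_measure_Diff F F2 cdf0 c_def subset_eq)
  qed
  have P10: "prob {\<omega>\<in>space M. Y t \<omega> = 1 \<and> Y (Suc t) \<omega> = 0} = 1 - p - c"
  proof -
    have "{\<omega>\<in>space M. Y t \<omega> = 1 \<and> Y (Suc t) \<omega> = 0} = {\<omega>\<in>space M. X (Suc t) \<omega> \<le> 0} - {\<omega>\<in>space M. X t \<omega> \<le> 0 \<and> X (Suc t) \<omega> \<le> 0}"
      by (auto simp: Y_def)
    then show ?thesis by (simp add: finite_measure_Diff F F2 cdf0 c_def subset_eq)
  qed
  have P11: "prob {\<omega>\<in>space M. Y t \<omega> = 1 \<and> Y (Suc t) \<omega> = 1} = 2*p - 1 + c"
  proof -
    have "{\<omega>\<in>space M. Y t \<omega> = 1 \<and> Y (Suc t) \<omega> = 1} = {\<omega>\<in>space M. Y t \<omega> = 1} - {\<omega>\<in>space M. Y t \<omega> = 1 \<and> Y (Suc t) \<omega> = 0}"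
      by (auto simp: Y_def)
    moreover have "prob ({\<omega>\<in>space M. Y t \<omega> = 1} - {\<omega>\<in>space M. Y t \<omega> = 1 \<and> Y (Suc t) \<omega> = 0})
        = prob {\<omega>\<in>space M. Y t \<omega> = 1} - prob {\<omega>\<in>space M. Y t \<omega> = 1 \<and> Y (Suc t) \<omega> = 0}"
      by (rule finite_measure_Diff) auto
    ultimately show ?thesis using P10 pY[of 1 t] by (simp add: pif_def)
  qed
  have e1: "(1-p) * (c/(1-p)) = c" "(1-p) * (1 - c/(1-p)) = 1-p-c"
    "p * (1 - (2*p - 1 + c)/p) = 1-p-c" "p * ((2*p - 1 + c)/p) = 2*p-1+c"
    using p0 p1 by (simp_all add: field_simps)
  show ?thesis using assms P00 P01 P10 P11 e1
    by (auto simp: pif_def Qf_def q00_def q11_def)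
qed

lemma markovY:
  "prob {\<omega>\<in>space M. \<forall>i\<le>Suc t. Y i \<omega> = x i} * prob {\<omega>\<in>space M. Y t \<omega> = x t}
   = prob {\<omega>\<in>space M. \<forall>i\<le>t. Y i \<omega> = x i} * prob {\<omega>\<in>space M. Y t \<omega> = x t \<and> Y (Suc t) \<omega> = x (Suc t)}"
proof -
  have h: "prob {\<omega>\<in>space M. Q (\<lambda>i. X i \<omega>)} = prob {\<omega>\<in>space M. Q (\<lambda>i. Y i \<omega>)}"
    if "Measurable.pred M (\<lambda>\<omega>. Q (\<lambda>i. X i \<omega>))" "Measurable.pred M (\<lambda>\<omega>. Q (\<lambda>i. Y i \<omega>))" for Q
  proof (rule finite_measure_eq_AE)
    show "AE \<omega> in M. (\<omega> \<in> {\<omega>\<in>space M. Q (\<lambda>i. X i \<omega>)}) = (\<omega> \<in> {\<omega>\<in>space M. Q (\<lambda>i. Y i \<omega>)})"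
      using AEXY
    proof eventually_elim
      case (elim \<omega>)
      then have "(\<lambda>i. X i \<omega>) = (\<lambda>i. Y i \<omega>)" by auto
      then show ?case by simp
    qed
  qed (use that in auto)
  have 1: "prob {\<omega>\<in>space M. \<forall>i\<le>Suc t. X i \<omega> = x i} = prob {\<omega>\<in>space M. \<forall>i\<le>Suc t. Y i \<omega> = x i}"
    using h[of "\<lambda>f. \<forall>i\<le>Suc t. f i = x i"] by simp
  have 2: "prob {\<omega>\<in>space M. \<forall>i\<le>t. X i \<omega> = x i} = prob {\<omega>\<in>space M. \<forall>i\<le>t. Y i \<omega> = x i}"
    using h[of "\<lambda>f. \<forall>i\<le>t. f i = x i"] by simp
  have 3: "prob {\<omega>\<in>space M. X t \<omega> = x t} = prob {\<omega>\<in>space M. Y t \<omega> = x t}"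
    using h[of "\<lambda>f. f t = x t"] by simp
  have 4: "prob {\<omega>\<in>space M. X t \<omega> = x t \<and> X (Suc t) \<omega> = x (Suc t)} = prob {\<omega>\<in>space M. Y t \<omega> = x t \<and> Y (Suc t) \<omega> = x (Suc t)}"
    using h[of "\<lambda>f. f t = x t \<and> f (Suc t) = x (Suc t)"] by simp
  have "prob {\<omega>\<in>space M. \<forall>i\<le>Suc t. X i \<omega> = x i} * prob {\<omega>\<in>space M. X t \<omega> = x t}
   = prob {\<omega>\<in>space M. \<forall>i\<le>t. X i \<omega> = x i} * prob {\<omega>\<in>space M. X t \<omega> = x t \<and> X (Suc t) \<omega> = x (Suc t)}"
    using markovX unfolding discrete_markov_def by blast
  then show ?thesis unfolding 1 2 3 4 .
qed

lemma c_lt: "p < 1/2 \<Longrightarrow> c = a*(1-p) + (1-a)*(1-2*p)"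
  by (simp add: c_def mix_copula_def max_def)
lemma c_ge: "\<not> p < 1/2 \<Longrightarrow> c = a*(1-p)"
  by (simp add: c_def mix_copula_def max_def)

lemma lam_lt: "p < 1/2 \<Longrightarrow> q00 + q11 - 1 = (a-p)/(1-p)"
  using p0 p1 by (simp add: c_lt q00_def q11_def field_simps)
lemma lam_ge: "\<not> p < 1/2 \<Longrightarrow> q00 + q11 - 1 = (a+p-1)/p"
  using p0 p1 by (simp add: c_ge q00_def q11_def field_simps)

sublocale tw: twost q00 q11 p
proof
  show "0 < p" "p < 1" by (rule p0, rule p1)
  show "(1-p)*(1-q00) = p*(1-q11)"
    using p0 p1 by (simp add: q00_def q11_def field_simps)
  show "\<bar>q00 + q11 - 1\<bar> < 1"
  proof (cases "p < 1/2")
    case True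
    have "-(1-p) < a - p" "a - p < 1 - p" using True a0 a1 by auto
    then show ?thesis unfolding lam_lt[OF True] using p1 by (simp add: abs_less_iff divide_simps)
  next
    case False
    have "-p < a + p - 1" "a + p - 1 < p" using False a0 a1 by auto
    then show ?thesis unfolding lam_ge[OF False] using p0 by (simp add: abs_less_iff divide_simps)
  qed
qed

lemma s2_val: "tw.s2 = (if p < 1/2 then p * (1 - p) * (1 + a - 2 * p) / (1 - a)
                           else p * (1 - p) * (a + 2 * p - 1) / (1 - a))"
proof (cases "p < 1/2")
  case True
  have "tw.s2 = p*(1-p)*(1 + (a-p)/(1-p))/(1 - (a-p)/(1-p))"
    unfolding tw.s2_eq tw.lam_def lam_lt[OF True] ..
  also have "\<dots> = p * (1 - p) * (1 + a - 2 * p) / (1 - a)"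
  proof -
    have "1 + (a-p)/(1-p) = (1+a-2*p)/(1-p)" "1 - (a-p)/(1-p) = (1-a)/(1-p)" using p1 by (simp_all add: field_simps)
    then show ?thesis using p1 a1 by simp
  qed
  finally show ?thesis using True by simp
next
  case False
  have "tw.s2 = p*(1-p)*(1 + (a+p-1)/p)/(1 - (a+p-1)/p)"
    unfolding tw.s2_eq tw.lam_def lam_ge[OF False] ..
  also have "\<dots> = p * (1 - p) * (a + 2 * p - 1) / (1 - a)"
  proof -
    have "1 + (a+p-1)/p = (a+2*p-1)/p" "1 - (a+p-1)/p = (1-a)/p" using p0 by (simp_all add: field_simps)
    then show ?thesis using p0 a1 by simp
  qed
  finally show ?thesis using False by simp
qed

lemma intb:
  fixes f :: "'s \<Rightarrow> complex"
  assumes "f \<in> borel_measurable M" "\<And>\<omega>. \<omega> \<in> space M \<Longrightarrow> norm (f \<omega>) \<le> B"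
  shows "integrable M f"
  using assms by (intro integrable_const_bound[where B=B] AE_I2) auto

definition "Pn (n::nat) = PiE {..n} (\<lambda>_. {0::real, 1})"
definition "pth (n::nat) \<omega> = restrict (\<lambda>i. Y i \<omega>) {..n}"
definition "En (n::nat) xs = {\<omega>\<in>space M. \<forall>i\<le>n. Y i \<omega> = xs i}"

lemma finite_Pn: "finite (Pn n)"
  unfolding Pn_def by (rule finite_PiE) simp_all

lemma pth_in: "pth n \<omega> \<in> Pn n"
  unfolding Pn_def pth_def using Y01 by auto

lemma En_sets[measurable]: "En n xs \<in> sets M"
  unfolding En_def by measurable

lemma En_iff:
  assumes xs: "xs \<in> Pn n"
  shows "(\<forall>i\<le>n. Y i \<omega> = xs i) \<longleftrightarrow> pth n \<omega> = xs"
proof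
  assume h: "\<forall>i\<le>n. Y i \<omega> = xs i"
  show "pth n \<omega> = xs"
  proof (rule ext)
    fix i show "pth n \<omega> i = xs i"
    proof (cases "i \<le> n")
      case True then show ?thesis using h by (simp add: pth_def)
    next
      case False then show ?thesis using xs by (simp add: pth_def Pn_def PiE_def extensional_def)
    qed
  qed
next
  assume "pth n \<omega> = xs"
  then show "\<forall>i\<le>n. Y i \<omega> = xs i" by (auto simp: pth_def)
qed

lemma decomp:
  assumes A: "A \<in> sets M"
  shows "(\<integral>\<omega>. f (pth n \<omega>) * complex_of_real (indicator A \<omega>) \<partial>M)
       = (\<Sum>xs\<in>Pn n. f xs * complex_of_real (prob (En n xs \<inter> A)))"
proof -
  have pw: "f (pth n \<omega>) * complex_of_real (indicator A \<omega>)
      = (\<Sum>xs\<in>Pn n. f xs * complex_of_real (indicator (En n xs \<inter> A) \<omega>))" if \<omega>: "\<omega> \<in> space M" for \<omega>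
  proof -
    have "(\<Sum>xs\<in>Pn n. f xs * complex_of_real (indicator (En n xs \<inter> A) \<omega>))
        = (\<Sum>xs\<in>Pn n. if pth n \<omega> = xs then f xs * complex_of_real (indicator A \<omega>) else 0)"
    proof (rule sum.cong[OF refl])
      fix xs assume xs: "xs \<in> Pn n"
      show "f xs * complex_of_real (indicator (En n xs \<inter> A) \<omega>)
          = (if pth n \<omega> = xs then f xs * complex_of_real (indicator A \<omega>) else 0)"
        using En_iff[OF xs, of \<omega>] \<omega> by (auto simp: En_def indicator_def)
    qed
    also have "\<dots> = f (pth n \<omega>) * complex_of_real (indicator A \<omega>)"
      using pth_in[of n \<omega>] finite_Pn[of n] by (simp add: sum.delta')
    finally show ?thesis by simp
  qed
  have "(\<integral>\<omega>. f (pth n \<omega>) * complex_of_real (indicator A \<omega>) \<partial>M)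
      = (\<integral>\<omega>. (\<Sum>xs\<in>Pn n. f xs * complex_of_real (indicator (En n xs \<inter> A) \<omega>)) \<partial>M)"
    by (rule Bochner_Integration.integral_cong[OF refl]) (rule pw)
  also have "\<dots> = (\<Sum>xs\<in>Pn n. (\<integral>\<omega>. f xs * complex_of_real (indicator (En n xs \<inter> A) \<omega>) \<partial>M))"
  proof (rule Bochner_Integration.integral_sum)
    fix xs
    show "integrable M (\<lambda>\<omega>. f xs * complex_of_real (indicator (En n xs \<inter> A) \<omega>))"
      using A by (intro integrable_mult_right intb[where B=1]) (auto simp: indicator_def)
  qed
  also have "\<dots> = (\<Sum>xs\<in>Pn n. f xs * complex_of_real (prob (En n xs \<inter> A)))"
  proof (rule sum.cong[OF refl])
    fix xs
    have "En n xs \<inter> A \<inter> space M = En n xs \<inter> A" using A sets.sets_into_space by (auto simp: En_def)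
    then show "(\<integral>\<omega>. f xs * complex_of_real (indicator (En n xs \<inter> A) \<omega>) \<partial>M) = f xs * complex_of_real (prob (En n xs \<inter> A))"
      by simp
  qed
  finally show ?thesis .
qed

lemma Pn_val: "xs \<in> Pn n \<Longrightarrow> i \<le> n \<Longrightarrow> xs i = 0 \<or> xs i = 1"
  by (auto simp: Pn_def PiE_def Pi_def)

lemma mk:
  assumes xs: "xs \<in> Pn n" and y: "y = 0 \<or> y = 1"
  shows "prob (En n xs \<inter> {\<omega>\<in>space M. Y (Suc n) \<omega> = y}) = prob (En n xs) * Qf (xs n) y"
proof -
  define x' where "x' = xs(Suc n := y)"
  have s1: "{\<omega>\<in>space M. \<forall>i\<le>Suc n. Y i \<omega> = x' i} = En n xs \<inter> {\<omega>\<in>space M. Y (Suc n) \<omega> = y}"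
    by (auto simp: En_def x'_def le_Suc_eq)
  have s2: "{\<omega>\<in>space M. \<forall>i\<le>n. Y i \<omega> = x' i} = En n xs"
    by (auto simp: En_def x'_def)
  have x1: "x' n = xs n" "x' (Suc n) = y" by (simp_all add: x'_def)
  have xn: "xs n = 0 \<or> xs n = 1" using Pn_val[OF xs, of n] by simp
  have "prob (En n xs \<inter> {\<omega>\<in>space M. Y (Suc n) \<omega> = y}) * pif (xs n)
      = prob (En n xs) * (pif (xs n) * Qf (xs n) y)"
    using markovY[of n x'] unfolding s1 s2 x1 pY[OF xn] P2Y[OF xn y] .
  then show ?thesis using pif_pos[OF xn] by (simp add: algebra_simps)
qed

definition "G n y u = (\<integral>\<omega>. iexp (u * (\<Sum>i\<le>n. Y i \<omega>)) * complex_of_real (indicator {\<omega>\<in>space M. Y n \<omega> = y} \<omega>) \<partial>M)"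
definition "fS n u xs = iexp (u * (\<Sum>i\<le>(n::nat). xs i))"

lemma fS_pth: "fS n u (pth n \<omega>) = iexp (u * (\<Sum>i\<le>n. Y i \<omega>))"
proof -
  have "(\<Sum>i\<le>n. pth n \<omega> i) = (\<Sum>i\<le>n. Y i \<omega>)" by (rule sum.cong) (auto simp: pth_def)
  then show ?thesis by (simp add: fS_def)
qed

lemma G_path: "G n y u = (\<Sum>xs\<in>Pn n. fS n u xs * complex_of_real (if xs n = y then prob (En n xs) else 0))"
proof -
  have "G n y u = (\<integral>\<omega>. fS n u (pth n \<omega>) * complex_of_real (indicator {\<omega>\<in>space M. Y n \<omega> = y} \<omega>) \<partial>M)"
    unfolding G_def fS_pth ..
  also have "\<dots> = (\<Sum>xs\<in>Pn n. fS n u xs * complex_of_real (prob (En n xs \<inter> {\<omega>\<in>space M. Y n \<omega> = y})))"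
    by (rule decomp) measurable
  also have "\<dots> = (\<Sum>xs\<in>Pn n. fS n u xs * complex_of_real (if xs n = y then prob (En n xs) else 0))"
  proof (rule sum.cong[OF refl])
    fix xs
    have "En n xs \<inter> {\<omega>\<in>space M. Y n \<omega> = y} = (if xs n = y then En n xs else {})"
      by (auto simp: En_def)
    then show "fS n u xs * complex_of_real (prob (En n xs \<inter> {\<omega>\<in>space M. Y n \<omega> = y}))
        = fS n u xs * complex_of_real (if xs n = y then prob (En n xs) else 0)" by simp
  qed
  finally show ?thesis .
qed

lemma G_suc:
  assumes y: "y = 0 \<or> y = 1"
  shows "G (Suc n) y u = iexp (u*y) * (\<Sum>xs\<in>Pn n. fS n u xs * complex_of_real (prob (En n xs) * Qf (xs n) y))"
proof -
  have pw: "iexp (u * (\<Sum>i\<le>Suc n. Y i \<omega>)) * complex_of_real (indicator {\<omega>\<in>space M. Y (Suc n) \<omega> = y} \<omega>)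
      = iexp (u*y) * (fS n u (pth n \<omega>) * complex_of_real (indicator {\<omega>\<in>space M. Y (Suc n) \<omega> = y} \<omega>))"
    if "\<omega> \<in> space M" for \<omega>
  proof (cases "Y (Suc n) \<omega> = y")
    case True
    have e: "u * (\<Sum>i\<le>Suc n. Y i \<omega>) = u*y + u*(\<Sum>i\<le>n. Y i \<omega>)"
      using True by (simp add: distrib_left add.commute)
    have "iexp (u * (\<Sum>i\<le>Suc n. Y i \<omega>)) = iexp (u*y) * iexp (u * (\<Sum>i\<le>n. Y i \<omega>))"
      by (simp only: e tw.iexp_add)
    then show ?thesis using that True by (simp add: fS_pth indicator_def)
  next
    case False
    then show ?thesis by (simp add: indicator_def)
  qed
  have "G (Suc n) y u = (\<integral>\<omega>. iexp (u*y) * (fS n u (pth n \<omega>) * complex_of_real (indicator {\<omega>\<in>space M. Y (Suc n) \<omega> = y} \<omega>)) \<partial>M)"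
    unfolding G_def by (rule Bochner_Integration.integral_cong[OF refl]) (rule pw)
  also have "\<dots> = iexp (u*y) * (\<integral>\<omega>. fS n u (pth n \<omega>) * complex_of_real (indicator {\<omega>\<in>space M. Y (Suc n) \<omega> = y} \<omega>) \<partial>M)"
    by (rule integral_mult_right_zero)
  also have "(\<integral>\<omega>. fS n u (pth n \<omega>) * complex_of_real (indicator {\<omega>\<in>space M. Y (Suc n) \<omega> = y} \<omega>) \<partial>M)
      = (\<Sum>xs\<in>Pn n. fS n u xs * complex_of_real (prob (En n xs \<inter> {\<omega>\<in>space M. Y (Suc n) \<omega> = y})))"
    by (rule decomp) measurable
  also have "\<dots> = (\<Sum>xs\<in>Pn n. fS n u xs * complex_of_real (prob (En n xs) * Qf (xs n) y))"
    by (rule sum.cong[OF refl]) (simp add: mk[OF _ y])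
  finally show ?thesis .
qed

lemma sum_split:
  "(\<Sum>xs\<in>Pn n. fS n u xs * complex_of_real (prob (En n xs) * Qf (xs n) y))
   = complex_of_real (Qf 0 y) * G n 0 u + complex_of_real (Qf 1 y) * G n 1 u"
proof -
  have "(\<Sum>xs\<in>Pn n. fS n u xs * complex_of_real (prob (En n xs) * Qf (xs n) y))
      = (\<Sum>xs\<in>Pn n. complex_of_real (Qf 0 y) * (fS n u xs * complex_of_real (if xs n = 0 then prob (En n xs) else 0))
          + complex_of_real (Qf 1 y) * (fS n u xs * complex_of_real (if xs n = 1 then prob (En n xs) else 0)))"
  proof (rule sum.cong[OF refl])
    fix xs assume xs: "xs \<in> Pn n"
    have "xs n = 0 \<or> xs n = 1" using Pn_val[OF xs, of n] by simp
    then show "fS n u xs * complex_of_real (prob (En n xs) * Qf (xs n) y)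
      = complex_of_real (Qf 0 y) * (fS n u xs * complex_of_real (if xs n = 0 then prob (En n xs) else 0))
          + complex_of_real (Qf 1 y) * (fS n u xs * complex_of_real (if xs n = 1 then prob (En n xs) else 0))"
      by (elim disjE) (simp_all add: algebra_simps)
  qed
  also have "\<dots> = complex_of_real (Qf 0 y) * G n 0 u + complex_of_real (Qf 1 y) * G n 1 u"
    unfolding G_path sum.distrib sum_distrib_left ..
  finally show ?thesis .
qed

lemma Qf_vals: "Qf 0 0 = q00" "Qf 0 1 = 1 - q00" "Qf 1 0 = 1 - q11" "Qf 1 1 = q11"
  by (simp_all add: Qf_def)

lemma G_rec:
  "G (Suc n) 0 u = q00 * G n 0 u + (1-q11) * G n 1 u"
  "G (Suc n) 1 u = iexp u * ((1-q00) * G n 0 u + q11 * G n 1 u)"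
  using G_suc[of 0 n u] G_suc[of 1 n u] sum_split[of n u 0] sum_split[of n u 1]
  by (simp_all add: Qf_vals)

lemma G0: "y = 0 \<or> y = 1 \<Longrightarrow> G 0 y u = iexp (u*y) * pif y"
proof -
  assume y: "y = 0 \<or> y = 1"
  have "G 0 y u = (\<integral>\<omega>. iexp (u*y) * complex_of_real (indicator {\<omega>\<in>space M. Y 0 \<omega> = y} \<omega>) \<partial>M)"
    unfolding G_def by (rule Bochner_Integration.integral_cong[OF refl]) (auto simp: indicator_def)
  also have "\<dots> = iexp (u*y) * pif y"
    using pY[OF y, of 0] by simp
  finally show ?thesis .
qed

lemma G_g: "G n 0 u = fst (tw.g u (Suc n)) \<and> G n 1 u = snd (tw.g u (Suc n))"
proof (induction n)
  case 0
  have a: "q00*(1-p) + (1-q11)*p = 1-p" using tw.stat by (simp add: algebra_simps)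
  have b: "(1-q00)*(1-p) + q11*p = p" using tw.stat by (simp add: algebra_simps)
  have "fst (tw.g u 1) = complex_of_real (q00*(1-p) + (1-q11)*p)"
       "snd (tw.g u 1) = iexp u * complex_of_real ((1-q00)*(1-p) + q11*p)"
    by (simp_all add: algebra_simps)
  then show ?case unfolding a b using G0[of 0 u] G0[of 1 u] by (simp add: pif_def)
next
  case (Suc n)
  then show ?case by (simp add: G_rec)
qed

lemma psi_G: "(\<integral>\<omega>. iexp (u * (\<Sum>i\<le>n. Y i \<omega>)) \<partial>M) = tw.psi u (Suc n)"
proof -
  let ?h = "\<lambda>\<omega>. iexp (u * (\<Sum>i\<le>n. Y i \<omega>))"
  have "(\<integral>\<omega>. ?h \<omega> \<partial>M) = (\<integral>\<omega>. ?h \<omega> * complex_of_real (indicator {\<omega>\<in>space M. Y n \<omega> = 0} \<omega>)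
      + ?h \<omega> * complex_of_real (indicator {\<omega>\<in>space M. Y n \<omega> = 1} \<omega>) \<partial>M)"
    by (rule Bochner_Integration.integral_cong[OF refl]) (use Y01 in \<open>auto simp: indicator_def\<close>)
  also have "\<dots> = G n 0 u + G n 1 u"
    unfolding G_def
    by (rule Bochner_Integration.integral_add; intro intb[where B=1]) (auto simp: indicator_def norm_mult)
  also have "\<dots> = tw.psi u (Suc n)"
    using G_g[of n u] by (simp add: tw.psi_def)
  finally show ?thesis .
qed

lemma char_eq:
  "char (distr M borel (\<lambda>\<omega>. sqrt (real n + 1) * ((\<Sum>t\<le>n. X t \<omega>) / (real n + 1) - p))) t
   = iexp (-(p * t * sqrt (real n + 1))) * tw.psi (t / sqrt (real n + 1)) (Suc n)"
proof -
  define N where "N = real n + 1"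
  have N0: "N > 0" by (simp add: N_def)
  have sN: "sqrt N * sqrt N = N" using N0 by simp
  have "char (distr M borel (\<lambda>\<omega>. sqrt N * ((\<Sum>t\<le>n. X t \<omega>) / N - p))) t
      = (\<integral>\<omega>. iexp (t * (sqrt N * ((\<Sum>t\<le>n. X t \<omega>) / N - p))) \<partial>M)"
    unfolding char_def by (subst integral_distr) auto
  also have "\<dots> = (\<integral>\<omega>. iexp (t * (sqrt N * ((\<Sum>t\<le>n. Y t \<omega>) / N - p))) \<partial>M)"
  proof (rule integral_cong_AE)
    show "AE \<omega> in M. iexp (t * (sqrt N * ((\<Sum>t\<le>n. X t \<omega>) / N - p))) = iexp (t * (sqrt N * ((\<Sum>t\<le>n. Y t \<omega>) / N - p)))"
      using AEXY by eventually_elim simp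
  qed auto
  also have "\<dots> = (\<integral>\<omega>. iexp (-(p * t * sqrt N)) * iexp ((t / sqrt N) * (\<Sum>i\<le>n. Y i \<omega>)) \<partial>M)"
  proof (rule Bochner_Integration.integral_cong[OF refl])
    fix \<omega>
    have "t * (sqrt N * ((\<Sum>t\<le>n. Y t \<omega>) / N - p)) = -(p * t * sqrt N) + (t / sqrt N) * (\<Sum>i\<le>n. Y i \<omega>)"
    proof -
      have "sqrt N * ((\<Sum>t\<le>n. Y t \<omega>) / N) = (\<Sum>i\<le>n. Y i \<omega>) / sqrt N"
        using N0 sN by (simp add: field_simps)
      then show ?thesis by (simp add: algebra_simps)
    qed
    then show "iexp (t * (sqrt N * ((\<Sum>t\<le>n. Y t \<omega>) / N - p))) = iexp (-(p * t * sqrt N)) * iexp ((t / sqrt N) * (\<Sum>i\<le>n. Y i \<omega>))"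
      by (simp only: tw.iexp_add)
  qed
  also have "\<dots> = iexp (-(p * t * sqrt N)) * tw.psi (t / sqrt N) (Suc n)"
    by (simp only: integral_mult_right_zero psi_G)
  finally show ?thesis unfolding N_def .
qed

end

theorem theorem4:
  fixes M :: "'s measure" and X :: "nat \<Rightarrow> 's \<Rightarrow> real" and a p \<sigma>2 :: real
  assumes "0 < a" "a < 1" "0 < p" "p < 1"
    and "copula_markov_chain M X (mix_copula a) (bernoulli_cdf p)"
    and "\<sigma>2 = (if p < 1/2 then p * (1 - p) * (1 + a - 2 * p) / (1 - a)
                           else p * (1 - p) * (a + 2 * p - 1) / (1 - a))"
  shows "weak_conv_m
           (\<lambda>n. distr M borel
                  (\<lambda>\<omega>. sqrt (real n + 1) * ((\<Sum>t\<le>n. X t \<omega>) / (real n + 1) - p)))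
           (density lborel (normal_density 0 (sqrt \<sigma>2)))"
proof -
  have pM: "prob_space M" using assms(5) by (simp add: copula_markov_chain_def)
  interpret C: cmc M X a p
    by (intro cmc.intro cmc_axioms.intro pM assms(1-5))
  have s: "\<sigma>2 = C.tw.s2" using assms(6) C.s2_val by simp
  have spos: "\<sigma>2 > 0" using C.tw.s2_pos s by simp
  have sq: "0 < sqrt \<sigma>2" using spos by simp
  show ?thesis
  proof (rule levy_continuity)
    fix n
    show "real_distribution (distr M borel (\<lambda>\<omega>. sqrt (real n + 1) * ((\<Sum>t\<le>n. X t \<omega>) / (real n + 1) - p)))"
      using C.Xm by (intro C.real_distribution_distr) measurable
  next
    show "real_distribution (density lborel (normal_density 0 (sqrt \<sigma>2)))"
      by (rule real_distribution_normal[OF sq])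
  next
    fix t
    have e: "(sqrt \<sigma>2 * t)^2 = C.tw.s2 * t^2"
      using spos s by (simp add: power_mult_distrib)
    show "(\<lambda>n. char (distr M borel (\<lambda>\<omega>. sqrt (real n + 1) * ((\<Sum>t\<le>n. X t \<omega>) / (real n + 1) - p))) t)
        \<longlonglongrightarrow> char (density lborel (normal_density 0 (sqrt \<sigma>2))) t"
      unfolding C.char_eq char_normal[OF sq] e
      using C.tw.main_lim[of t] by simp
  qed
qed

end
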